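(* Let $\mathbf{X}$ be a signal satisfying $\mathbf{X}=\mathbf{D}_1\boldsymbol{\Gamma}_1$, $\boldsymbol{\Gamma}_1=\mathbf{D}_2\boldsymbol{\Gamma}_2,\dots,\boldsymbol{\Gamma}_{K-1}=\mathbf{D}_K\boldsymbol{\Gamma}_K$, where $\{\mathbf{D}_i\}_{i=1}^K$ are convolutional dictionaries with mutual coherences $\mu(\mathbf{D}_i)$. Suppose that for all $1\le i\le K$, $$\|\boldsymbol{\Gamma}_i\|_{0,\infty}^{s}<\tfrac12\Big(1+\tfrac{1}{\mu(\mathbf{D}_i)}\Big),$$ and that the thresholds $\lambda_i$ satisfy $\|\boldsymbol{\Gamma}_i\|_{0,\infty}^{s}\le \lambda_i<\tfrac12\big(1+\tfrac{1}{\mu(\mathbf{D}_i)}\big)$ for all $1\le i\le K$. Then $\{\boldsymbol{\Gamma}_i\}_{i=1}^K$ is the unique solution of the problem $\mathrm{DCP}_{\boldsymbol\lambda}$ for $\mathbf{X}$.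
   Context: Setting (ML-CSC model). Signals are one-dimensional of length $N$ with periodic (cyclic) boundary conditions. Set $m_0=1$ and $\boldsymbol{\Gamma}_0=\mathbf{X}\in\mathbb{R}^N$. For $i\ge1$, $\boldsymbol{\Gamma}_i\in\mathbb{R}^{Nm_i}$ is indexed so that entry $k m_i+r$ ($0\le k<N$, $0\le r<m_i$) is the coefficient of filter $r$ at spatial shift $k$. The dictionary $\mathbf{D}_i\in\mathbb{R}^{Nm_{i-1}\times Nm_i}$ is a (stride) convolutional dictionary: it has $m_i$ local filters of length $n_{i-1}m_{i-1}$, and its column indexed $km_i+r$ is filter $r$ placed (cyclically) on entries $km_{i-1},\dots,km_{i-1}+n_{i-1}m_{i-1}-1$ of an $\mathbb{R}^{Nm_{i-1}}$ vector and zero elsewhere (for $i=1$ this is an ordinary convolutional dictionary with filters of length $n_0$). All columns (atoms) have unit $\ell_2$ norm. The mutual coherence is $\mu(\mathbf{D})=\max_{i\ne j}|\mathbf{d}_i^T\mathbf{d}_j|$ over distinct columns. Stripes: for $i\ge1$, the $j$-th stripe $\mathbf{S}_{i,j}\boldsymbol{\Gamma}_i$ is the subvector of $\boldsymbol{\Gamma}_i$ of length $(2n_{i-1}-1)m_i$ consisting of the coefficients at spatial shifts $k\in\{j-n_{i-1}+1,\dots,j+n_{i-1}-1\}$ (mod $N$), all channels, i.e. the coefficients of all atoms of $\mathbf{D}_i$ overlapping the $j$-th length-$n_{i-1}m_{i-1}$ patch of $\boldsymbol{\Gamma}_{i-1}$. Define $\|\boldsymbol{\Gamma}_i\|_{0,\infty}^{s}=\max_j\|\mathbf{S}_{i,j}\boldsymbol{\Gamma}_i\|_0$.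 Deep coding problem $\mathrm{DCP}_{\boldsymbol\lambda}$: given $\mathbf{X}$, $\{\mathbf{D}_i\}$ and $\boldsymbol\lambda=(\lambda_1,\dots,\lambda_K)$, find $\{\boldsymbol{\Gamma}_i\}_{i=1}^K$ such that $\boldsymbol{\Gamma}_{i-1}=\mathbf{D}_i\boldsymbol{\Gamma}_i$ and $\|\boldsymbol{\Gamma}_i\|_{0,\infty}^{s}\le\lambda_i$ for all $1\le i\le K$ (with $\boldsymbol{\Gamma}_0=\mathbf{X}$). *)

theory Defs
  imports Complex_Main "HOL-Library.Extended_Real"
begin

(* Vectors in R^{N m} are represented as functions nat => real; only the
   entries with index < N*m are meaningful.  A matrix in R^{R x C} is a
   function  D :: nat => nat => real  with D p c the entry in row p, column c. *)

definition matvec :: "nat \<Rightarrow> (nat \<Rightarrow> nat \<Rightarrow> real) \<Rightarrow> (nat \<Rightarrow> real) \<Rightarrow> nat \<Rightarrow> real" where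
  "matvec C D G p = (\<Sum>c<C. D p c * G c)"

(* (Stride) convolutional dictionary of size (N*mp) x (N*mc) with mc local
   filters of length len*mp: column k*mc+r is filter r placed cyclically on
   entries k*mp, ..., k*mp + len*mp - 1 of an R^{N*mp} vector, zero elsewhere. *)
definition conv_dict :: "nat \<Rightarrow> nat \<Rightarrow> nat \<Rightarrow> nat \<Rightarrow> (nat \<Rightarrow> nat \<Rightarrow> real) \<Rightarrow> bool" where
  "conv_dict N mp mc len D \<longleftrightarrow>
     (\<exists>h :: nat \<Rightarrow> nat \<Rightarrow> real. \<forall>p < N*mp. \<forall>c < N*mc.
        D p c = (let t = (p + N*mp - (c div mc)*mp) mod (N*mp)
                 in if t < len*mp then h (c mod mc) t else 0))"

definition unit_columns :: "nat \<Rightarrow> nat \<Rightarrow> (nat \<Rightarrow> nat \<Rightarrow> real) \<Rightarrow> bool" where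
  "unit_columns R C D \<longleftrightarrow> (\<forall>c<C. (\<Sum>p<R. (D p c)^2) = 1)"

definition mutual_coherence :: "nat \<Rightarrow> nat \<Rightarrow> (nat \<Rightarrow> nat \<Rightarrow> real) \<Rightarrow> real" where
  "mutual_coherence R C D =
     (let S = {\<bar>\<Sum>p<R. D p a * D p b\<bar> | a b. a < C \<and> b < C \<and> a \<noteq> b}
      in if S = {} then 0 else Max S)"

(* || S_{j} G ||_0 for a coefficient vector G in R^{N m}, patch length n:
   number of nonzero coefficients at spatial shifts k in {j-n+1,...,j+n-1} mod N,
   all channels r < m (entry k*m + r). *)
definition stripe_l0 :: "nat \<Rightarrow> nat \<Rightarrow> nat \<Rightarrow> (nat \<Rightarrow> real) \<Rightarrow> nat \<Rightarrow> nat" where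
  "stripe_l0 N n m G j =
     card {c. c < N*m \<and> G c \<noteq> 0 \<and>
              (\<exists>d::int. \<bar>d\<bar> < int n \<and> int (c div m) = (int j + d) mod int N)}"

definition stripe_norm :: "nat \<Rightarrow> nat \<Rightarrow> nat \<Rightarrow> (nat \<Rightarrow> real) \<Rightarrow> nat" where
  "stripe_norm N n m G = Max (stripe_l0 N n m G ` {..<N})"

(* the bound (1 + 1/mu)/2, in the extended reals so that mu = 0 gives +infinity *)
definition coh_bound :: "real \<Rightarrow> ereal" where
  "coh_bound mu = (1 + 1 / ereal mu) / 2"

(* {Gamma_i}_{i=1..K} solves DCP_lambda for X, with Gamma_0 = X.
   Layer i uses dictionary D i of size (N*m(i-1)) x (N*m i), and stripes w.r.t.
   patch length n(i-1). *)
definition dcp_solution ::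
  "nat \<Rightarrow> (nat \<Rightarrow> nat) \<Rightarrow> (nat \<Rightarrow> nat) \<Rightarrow> nat \<Rightarrow> (nat \<Rightarrow> nat \<Rightarrow> nat \<Rightarrow> real)
   \<Rightarrow> (nat \<Rightarrow> real) \<Rightarrow> (nat \<Rightarrow> real) \<Rightarrow> (nat \<Rightarrow> nat \<Rightarrow> real) \<Rightarrow> bool" where
  "dcp_solution N m n K D lam X G \<longleftrightarrow>
     (\<forall>i\<in>{1..K}. \<forall>p < N * m (i-1).
        (if i = 1 then X p else G (i-1) p) = matvec (N * m i) (D i) (G i) p) \<and>
     (\<forall>i\<in>{1..K}. real (stripe_norm N (n (i-1)) (m i) (G i)) \<le> lam i)"

end

theory Submission
  imports Defs
begin

lemma coh_pos:
  assumes "mu > 0" "ereal lam < coh_bound mu"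
  shows "lam < (1 + 1/mu)/2"
proof -
  have "coh_bound mu = ereal ((1 + 1/mu)/2)"
    proof -
      have "(1::ereal) + 1 / ereal mu = ereal (1 + 1/mu)" using assms(1) by (simp add: one_ereal_def)
      moreover have "ereal x / 2 = ereal (x/2)" for x
        proof -
          have "(2::ereal) = ereal 2" by simp
          thus ?thesis by simp
        qed
      ultimately show ?thesis unfolding coh_bound_def by simp
    qed
  thus ?thesis using assms(2) by simp
qed

lemma overlap:
  fixes N mp len ka kb p :: nat
  assumes mp: "mp \<ge> 1" and p: "p < N*mp" and ka: "ka < N" and kb: "kb < N"
    and ta: "(p + N*mp - ka*mp) mod (N*mp) < len*mp"
    and tb: "(p + N*mp - kb*mp) mod (N*mp) < len*mp"
  shows "\<exists>d::int. \<bar>d\<bar> < int len \<and> int kb = (int ka + d) mod int N"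
proof -
  define P where "P = p div mp"
  define r where "r = p mod mp"
  have pe: "int p = int P * int mp + int r" unfolding P_def r_def
    by (metis div_mult_mod_eq of_nat_add of_nat_mult)
  have r: "0 \<le> int r" "int r < int mp" using mp unfolding r_def by auto
  have key: "int ((p + N*mp - k*mp) mod (N*mp)) = int mp * ((int P - int k) mod int N) + int r"
    if k: "k < N" for k
  proof -
    have le: "k*mp \<le> N*mp" using k by simp
    have "int ((p + N*mp - k*mp) mod (N*mp)) = (int p + int N * int mp - int k * int mp) mod (int mp * int N)"
    proof -
      have "int (p + N*mp - k*mp) = int p + int N * int mp - int k * int mp"
      proof -
        have "k*mp \<le> p + N*mp" using le by linarith
        hence "int (p + N*mp - k*mp) = int (p + N*mp) - int (k*mp)" by (rule of_nat_diff)
        thus ?thesis by simp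
      qed
      thus ?thesis by (simp add: zmod_int mult.commute)
    qed
    also have "\<dots> = ((int P - int k + int N) * int mp + int r) mod (int mp * int N)"
      by (simp add: pe algebra_simps)
    also have "\<dots> = int mp * ((((int P - int k + int N) * int mp + int r) div int mp) mod int N)
         + ((int P - int k + int N) * int mp + int r) mod int mp"
      by (rule mod_mult2_eq')
    also have "((int P - int k + int N) * int mp + int r) div int mp = int P - int k + int N"
      using r by simp
    also have "((int P - int k + int N) * int mp + int r) mod int mp = int r"
      using r by simp
    also have "(int P - int k + int N) mod int N = (int P - int k) mod int N"
      by (simp add: mod_add_self2)
    finally show ?thesis .
  qed
  define ea where "ea = (int P - int ka) mod int N"
  define eb where "eb = (int P - int kb) mod int N"
  have Npos: "N > 0" using ka by simp
  have ea: "0 \<le> ea" "ea < int len"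
  proof -
    show "0 \<le> ea" using Npos unfolding ea_def by simp
    have "int mp * ea + int r < int len * int mp" using key[OF ka] ta unfolding ea_def
      by (metis of_nat_less_iff of_nat_mult)
    hence "int mp * ea + int r < int mp * int len" by (simp add: mult.commute)
    hence "int mp * ea < int mp * int len" using r(1) by linarith
    thus "ea < int len" using mp by simp
  qed
  have eb: "0 \<le> eb" "eb < int len"
  proof -
    show "0 \<le> eb" using Npos unfolding eb_def by simp
    have "int mp * eb + int r < int len * int mp" using key[OF kb] tb unfolding eb_def
      by (metis of_nat_less_iff of_nat_mult)
    hence "int mp * eb + int r < int mp * int len" by (simp add: mult.commute)
    hence "int mp * eb < int mp * int len" using r(1) by linarith
    thus "eb < int len" using mp by simp
  qed
  show ?thesis
  proof (intro exI conjI)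
    show "\<bar>ea - eb\<bar> < int len" using ea eb by simp
    have "(int ka + (ea - eb)) mod int N = (int ka + ((int P - int ka) - (int P - int kb))) mod int N"
      unfolding ea_def eb_def by (metis mod_add_right_eq mod_diff_eq)
    also have "\<dots> = int kb" using kb by simp
    finally show "int kb = (int ka + (ea - eb)) mod int N" by simp
  qed
qed

lemma coh_le:
  assumes "a < C" "b < C" "a \<noteq> b"
  shows "\<bar>\<Sum>p<R. D p a * D p b\<bar> \<le> mutual_coherence R C D"
proof -
  let ?S = "{\<bar>\<Sum>p<R. D p a * D p b\<bar> | a b. a < C \<and> b < C \<and> a \<noteq> b}"
  have "?S \<subseteq> (\<lambda>(a,b). \<bar>\<Sum>p<R. D p a * D p b\<bar>) ` ({..<C} \<times> {..<C})" by auto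
  hence fin: "finite ?S" by (rule finite_subset) simp
  have mem: "\<bar>\<Sum>p<R. D p a * D p b\<bar> \<in> ?S" using assms by blast
  hence "?S \<noteq> {}" by auto
  hence "mutual_coherence R C D = Max ?S" unfolding mutual_coherence_def Let_def by (rule if_not_P)
  thus ?thesis using Max_ge[OF fin mem] by simp
qed

lemma stripe_le_norm:
  assumes "j < N"
  shows "stripe_l0 N n m G j \<le> stripe_norm N n m G"
  unfolding stripe_norm_def using assms by (intro Max_ge) auto

lemma stripe_sub:
  assumes "\<And>c. A c - B c \<noteq> 0 \<Longrightarrow> A c \<noteq> 0 \<or> B c \<noteq> 0"
  shows "stripe_l0 N n m (\<lambda>c. A c - B c) j \<le> stripe_l0 N n m A j + stripe_l0 N n m B j"
proof -
  let ?P = "\<lambda>c. (\<exists>d::int. \<bar>d\<bar> < int n \<and> int (c div m) = (int j + d) mod int N)"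
  have "{c. c < N*m \<and> A c - B c \<noteq> 0 \<and> ?P c} \<subseteq>
        {c. c < N*m \<and> A c \<noteq> 0 \<and> ?P c} \<union> {c. c < N*m \<and> B c \<noteq> 0 \<and> ?P c}"
    by auto
  hence "card {c. c < N*m \<and> A c - B c \<noteq> 0 \<and> ?P c} \<le>
        card ({c. c < N*m \<and> A c \<noteq> 0 \<and> ?P c} \<union> {c. c < N*m \<and> B c \<noteq> 0 \<and> ?P c})"
    by (intro card_mono) auto
  also have "\<dots> \<le> card {c. c < N*m \<and> A c \<noteq> 0 \<and> ?P c} + card {c. c < N*m \<and> B c \<noteq> 0 \<and> ?P c}"
    by (rule card_Un_le)
  finally show ?thesis unfolding stripe_l0_def .
qed

lemma uniq_layer:
  fixes N mp mc len :: nat and D :: "nat \<Rightarrow> nat \<Rightarrow> real" and A B :: "nat \<Rightarrow> real" and lam :: real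
  assumes N: "N \<ge> 1" and mp: "mp \<ge> 1" and mc: "mc \<ge> 1" and len: "len \<ge> 1"
    and conv: "conv_dict N mp mc len D"
    and unit: "unit_columns (N*mp) (N*mc) D"
    and eq: "\<forall>p<N*mp. matvec (N*mc) D A p = matvec (N*mc) D B p"
    and nA: "real (stripe_norm N len mc A) \<le> lam"
    and nB: "real (stripe_norm N len mc B) \<le> lam"
    and lb: "ereal lam < coh_bound (mutual_coherence (N*mp) (N*mc) D)"
  shows "\<forall>c<N*mc. A c = B c"
proof (rule ccontr)
  define R where "R = N*mp"
  define C where "C = N*mc"
  define \<Delta> where "\<Delta> c = A c - B c" for c
  define \<mu> where "\<mu> = mutual_coherence R C D"
  define g where "g a b = (\<Sum>p<R. D p a * D p b)" for a b
  assume "\<not> ?thesis"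
  then obtain c0 where c0: "c0 < C" "\<Delta> c0 \<noteq> 0" unfolding \<Delta>_def C_def by auto
  define M where "M = Max ((\<lambda>c. \<bar>\<Delta> c\<bar>) ` {..<C})"
  have "M \<in> (\<lambda>c. \<bar>\<Delta> c\<bar>) ` {..<C}" unfolding M_def using c0 by (intro Max_in) auto
  then obtain a where a: "a < C" "M = \<bar>\<Delta> a\<bar>" by auto
  have amax: "\<bar>\<Delta> c\<bar> \<le> \<bar>\<Delta> a\<bar>" if "c < C" for c
    using that a(2) unfolding M_def by (metis Max_ge finite_imageI finite_lessThan image_eqI lessThan_iff)
  have Da: "\<Delta> a \<noteq> 0" using amax[OF c0(1)] c0(2) by auto
  have inner: "(\<Sum>c<C. D p c * \<Delta> c) = 0" if "p < R" for p
  proof -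
    have "(\<Sum>c<C. D p c * \<Delta> c) = matvec C D A p - matvec C D B p"
      unfolding matvec_def \<Delta>_def by (simp add: sum_subtractf right_diff_distrib)
    thus ?thesis using eq that unfolding R_def C_def by simp
  qed
  have zero: "(\<Sum>c<C. g a c * \<Delta> c) = 0"
  proof -
    have "(\<Sum>c<C. g a c * \<Delta> c) = (\<Sum>c<C. \<Sum>p<R. D p a * (D p c * \<Delta> c))"
      unfolding g_def by (simp add: sum_distrib_right mult.assoc)
    also have "\<dots> = (\<Sum>p<R. \<Sum>c<C. D p a * (D p c * \<Delta> c))" by (rule sum.swap)
    also have "\<dots> = (\<Sum>p<R. D p a * (\<Sum>c<C. D p c * \<Delta> c))" by (simp add: sum_distrib_left)
    also have "\<dots> = 0" using inner by simp
    finally show ?thesis .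
  qed
  have gaa: "g a a = 1" using unit a(1) unfolding unit_columns_def g_def R_def C_def
    by (simp add: power2_eq_square)
  have "(\<Sum>c<C. g a c * \<Delta> c) = g a a * \<Delta> a + (\<Sum>c\<in>{..<C}-{a}. g a c * \<Delta> c)"
    using a(1) by (simp add: sum.remove)
  hence Deq: "\<Delta> a = - (\<Sum>c\<in>{..<C}-{a}. g a c * \<Delta> c)" using zero gaa by simp
  define T where "T = {c. c < C \<and> c \<noteq> a \<and> \<Delta> c \<noteq> 0 \<and>
     (\<exists>d::int. \<bar>d\<bar> < int len \<and> int (c div mc) = (int (a div mc) + d) mod int N)}"
  have finT: "finite T" unfolding T_def by auto
  have coh: "\<bar>g a c\<bar> \<le> \<mu>" if "c < C" "c \<noteq> a" for c
    unfolding g_def \<mu>_def using coh_le[where a=a and b=c and R=R and D=D and C=C] that a(1) by simp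
  have ovl: "\<exists>d::int. \<bar>d\<bar> < int len \<and> int (c div mc) = (int (a div mc) + d) mod int N"
    if cc: "c < C" "g a c \<noteq> 0" for c
  proof -
    obtain p where p: "p < R" "D p a * D p c \<noteq> 0"
      using cc(2) unfolding g_def by (meson lessThan_iff sum.neutral)
    obtain h where h: "\<forall>p < N*mp. \<forall>c < N*mc.
        D p c = (let t = (p + N*mp - (c div mc)*mp) mod (N*mp)
                 in if t < len*mp then h (c mod mc) t else 0)"
      using conv unfolding conv_dict_def by blast
    have ta: "(p + N*mp - (a div mc)*mp) mod (N*mp) < len*mp"
      using h p a(1) unfolding R_def C_def Let_def by (metis mult_zero_left)
    have tc: "(p + N*mp - (c div mc)*mp) mod (N*mp) < len*mp"
      using h p cc(1) unfolding R_def C_def Let_def by (metis mult_zero_right)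
    have ka: "a div mc < N" using a(1) unfolding C_def
      by (metis less_mult_imp_div_less)
    have kc: "c div mc < N" using cc(1) unfolding C_def
      by (metis less_mult_imp_div_less)
    show ?thesis using overlap[OF mp _ ka kc ta tc] p(1) unfolding R_def by simp
  qed
  have tmb: "\<bar>g a c * \<Delta> c\<bar> \<le> (if c \<in> T then \<mu> * \<bar>\<Delta> a\<bar> else 0)"
    if "c \<in> {..<C}-{a}" for c
  proof (cases "\<Delta> c = 0 \<or> g a c = 0")
    case True
    have cc: "c < C" "c \<noteq> a" using that by auto
    have "0 \<le> \<mu>" using coh[OF cc] abs_ge_zero[of "g a c"] by linarith
    hence "0 \<le> \<mu> * \<bar>\<Delta> a\<bar>" by simp
    with True show ?thesis by auto
  next
    case False
    have cT: "c \<in> T" using False ovl[of c] that unfolding T_def by auto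
    have "\<bar>g a c * \<Delta> c\<bar> = \<bar>g a c\<bar> * \<bar>\<Delta> c\<bar>" by (simp add: abs_mult)
    also have "\<dots> \<le> \<mu> * \<bar>\<Delta> a\<bar>"
      using coh[of c] amax[of c] that by (intro mult_mono) auto
    finally show ?thesis using cT by simp
  qed
  have "\<bar>\<Delta> a\<bar> \<le> (\<Sum>c\<in>{..<C}-{a}. \<bar>g a c * \<Delta> c\<bar>)"
  proof -
    have "\<bar>\<Delta> a\<bar> = \<bar>\<Sum>c\<in>{..<C}-{a}. g a c * \<Delta> c\<bar>" using Deq by simp
    also have "\<dots> \<le> (\<Sum>c\<in>{..<C}-{a}. \<bar>g a c * \<Delta> c\<bar>)" by (rule sum_abs)
    finally show ?thesis .
  qed
  also have "\<dots> \<le> (\<Sum>c\<in>{..<C}-{a}. (if c \<in> T then \<mu> * \<bar>\<Delta> a\<bar> else 0))"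
    using tmb by (intro sum_mono) auto
  also have "\<dots> = real (card T) * (\<mu> * \<bar>\<Delta> a\<bar>)"
  proof -
    have "T \<subseteq> {..<C}-{a}" unfolding T_def by auto
    hence TT: "({..<C}-{a}) \<inter> T = T" by blast
    have "(\<Sum>c\<in>{..<C}-{a}. (if c \<in> T then \<mu> * \<bar>\<Delta> a\<bar> else 0))
          = (\<Sum>c\<in>({..<C}-{a}) \<inter> T. \<mu> * \<bar>\<Delta> a\<bar>)"
      by (rule sum.inter_restrict[symmetric]) simp
    thus ?thesis unfolding TT by simp
  qed
  finally have "\<bar>\<Delta> a\<bar> * 1 \<le> \<bar>\<Delta> a\<bar> * (real (card T) * \<mu>)" by (simp add: algebra_simps)
  hence one: "1 \<le> real (card T) * \<mu>" using Da by (simp add: mult_le_cancel_left)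
  hence Tne: "T \<noteq> {}" by auto
  have mupos: "\<mu> > 0"
  proof (rule ccontr)
    assume "\<not> \<mu> > 0"
    hence "real (card T) * \<mu> \<le> 0" by (simp add: mult_nonneg_nonpos)
    thus False using one by simp
  qed
  define j where "j = a div mc"
  have jN: "j < N" using a(1) unfolding C_def j_def by (metis less_mult_imp_div_less)
  have sub: "insert a T \<subseteq> {c. c < N*mc \<and> (\<lambda>c. A c - B c) c \<noteq> 0 \<and>
              (\<exists>d::int. \<bar>d\<bar> < int len \<and> int (c div mc) = (int j + d) mod int N)}"
  proof -
    have "int j = (int j + 0) mod int N" using jN by simp
    hence "\<exists>d::int. \<bar>d\<bar> < int len \<and> int (a div mc) = (int j + d) mod int N"
      using len unfolding j_def by (intro exI[of _ 0]) auto
    thus ?thesis using a(1) Da unfolding T_def j_def C_def \<Delta>_def by auto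
  qed
  have aT: "a \<notin> T" unfolding T_def by auto
  have "card T + 1 = card (insert a T)" using finT aT by simp
  also have "\<dots> \<le> stripe_l0 N len mc (\<lambda>c. A c - B c) j"
    unfolding stripe_l0_def by (rule card_mono[OF _ sub]) auto
  also have "\<dots> \<le> stripe_l0 N len mc A j + stripe_l0 N len mc B j"
    by (rule stripe_sub) auto
  also have "\<dots> \<le> stripe_norm N len mc A + stripe_norm N len mc B"
    using stripe_le_norm[OF jN] by (simp add: add_mono)
  finally have "real (card T) + 1 \<le> real (stripe_norm N len mc A) + real (stripe_norm N len mc B)"
    by linarith
  hence cT: "real (card T) + 1 \<le> 2 * lam" using nA nB by linarith
  have "lam < (1 + 1/\<mu>)/2" using coh_pos[OF mupos] lb unfolding \<mu>_def R_def C_def by simp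
  hence "lam * 2 < 1 + 1/\<mu>" by (simp add: less_divide_eq)
  hence "real (card T) < 1/\<mu>" using cT by linarith
  hence "real (card T) * \<mu> < 1" using mupos by (simp add: pos_less_divide_eq)
  thus False using one by simp
qed


theorem theorem1:
  fixes N K :: nat
    and m n :: "nat \<Rightarrow> nat"
    and D :: "nat \<Rightarrow> nat \<Rightarrow> nat \<Rightarrow> real"
    and X :: "nat \<Rightarrow> real"
    and G :: "nat \<Rightarrow> nat \<Rightarrow> real"
    and lam :: "nat \<Rightarrow> real"
  assumes N_pos: "N \<ge> 1"
    and m0: "m 0 = 1"
    and m_pos: "\<forall>i\<in>{1..K}. m i \<ge> 1"
    and n_range: "\<forall>i\<in>{1..K}. 1 \<le> n (i-1) \<and> n (i-1) \<le> N"
    and conv: "\<forall>i\<in>{1..K}. conv_dict N (m (i-1)) (m i) (n (i-1)) (D i)"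
    and unit: "\<forall>i\<in>{1..K}. unit_columns (N * m (i-1)) (N * m i) (D i)"
    and X_eq: "\<forall>p < N. X p = matvec (N * m 1) (D 1) (G 1) p"
    and chain: "\<forall>i\<in>{2..K}. \<forall>p < N * m (i-1). G (i-1) p = matvec (N * m i) (D i) (G i) p"
    and sparse: "\<forall>i\<in>{1..K}. ereal (real (stripe_norm N (n (i-1)) (m i) (G i)))
                   < coh_bound (mutual_coherence (N * m (i-1)) (N * m i) (D i))"
    and lam_bounds: "\<forall>i\<in>{1..K}. real (stripe_norm N (n (i-1)) (m i) (G i)) \<le> lam i \<and>
                   ereal (lam i) < coh_bound (mutual_coherence (N * m (i-1)) (N * m i) (D i))"
  shows "dcp_solution N m n K D lam X G \<and>
         (\<forall>G'. dcp_solution N m n K D lam X G' \<longrightarrow>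
                (\<forall>i\<in>{1..K}. \<forall>c < N * m i. G' i c = G i c))"
proof
  show "dcp_solution N m n K D lam X G"
    unfolding dcp_solution_def
  proof (intro conjI ballI allI impI)
    fix i p assume i: "i \<in> {1..K}" and p: "p < N * m (i-1)"
    show "(if i = 1 then X p else G (i-1) p) = matvec (N * m i) (D i) (G i) p"
    proof (cases "i = 1")
      case True thus ?thesis using X_eq p m0 by simp
    next
      case False
      hence "i \<in> {2..K}" using i by auto
      thus ?thesis using chain p False by simp
    qed
  next
    fix i assume "i \<in> {1..K}"
    thus "real (stripe_norm N (n (i-1)) (m i) (G i)) \<le> lam i" using lam_bounds by blast
  qed
next
  show "\<forall>G'. dcp_solution N m n K D lam X G' \<longrightarrow> (\<forall>i\<in>{1..K}. \<forall>c < N * m i. G' i c = G i c)"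
  proof (intro allI impI)
    fix G' assume sol: "dcp_solution N m n K D lam X G'"
    have E: "\<forall>i\<in>{1..K}. \<forall>p < N * m (i-1).
        (if i = 1 then X p else G' (i-1) p) = matvec (N * m i) (D i) (G' i) p"
      and S: "\<forall>i\<in>{1..K}. real (stripe_norm N (n (i-1)) (m i) (G' i)) \<le> lam i"
      using sol unfolding dcp_solution_def by auto
    have L: "\<forall>c<N*m (Suc j). G' (Suc j) c = G (Suc j) c"
      if j1: "Suc j \<in> {1..K}"
        and eqs: "\<forall>p<N*m j. matvec (N*m (Suc j)) (D (Suc j)) (G' (Suc j)) p
                    = matvec (N*m (Suc j)) (D (Suc j)) (G (Suc j)) p"
        and mj: "m j \<ge> 1" for j
    proof -
      have a1: "m (Suc j) \<ge> 1" using bspec[OF m_pos j1] by simp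
      have a2: "1 \<le> n j" using bspec[OF n_range j1] by simp
      have a3: "conv_dict N (m j) (m (Suc j)) (n j) (D (Suc j))" using bspec[OF conv j1] by simp
      have a4: "unit_columns (N * m j) (N * m (Suc j)) (D (Suc j))" using bspec[OF unit j1] by simp
      have a5: "real (stripe_norm N (n j) (m (Suc j)) (G' (Suc j))) \<le> lam (Suc j)"
        using bspec[OF S j1] by simp
      have a6: "real (stripe_norm N (n j) (m (Suc j)) (G (Suc j))) \<le> lam (Suc j)"
        and a7: "ereal (lam (Suc j)) < coh_bound (mutual_coherence (N * m j) (N * m (Suc j)) (D (Suc j)))"
        using bspec[OF lam_bounds j1] by simp_all
      show ?thesis by (rule uniq_layer[OF N_pos mj a1 a2 a3 a4 eqs a5 a6 a7])
    qed
    have main: "Suc j \<le> K \<longrightarrow> (\<forall>c < N * m (Suc j). G' (Suc j) c = G (Suc j) c)" for j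
    proof (induction j)
      case 0
      show ?case
      proof
        assume K: "Suc 0 \<le> K"
        hence i1: "Suc 0 \<in> {1..K}" by simp
        have eqs: "\<forall>p<N * m 0. matvec (N * m (Suc 0)) (D (Suc 0)) (G' (Suc 0)) p
                    = matvec (N * m (Suc 0)) (D (Suc 0)) (G (Suc 0)) p"
        proof (intro allI impI)
          fix p assume p: "p < N * m 0"
          have "X p = matvec (N * m (Suc 0)) (D (Suc 0)) (G' (Suc 0)) p"
          proof -
            have "\<forall>p<N * m (Suc 0 - 1). (if Suc 0 = 1 then X p else G' (Suc 0 - 1) p)
                 = matvec (N * m (Suc 0)) (D (Suc 0)) (G' (Suc 0)) p" using E i1 by blast
            thus ?thesis using p by simp
          qed
          moreover have "X p = matvec (N * m (Suc 0)) (D (Suc 0)) (G (Suc 0)) p"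
            using X_eq p m0 by simp
          ultimately show "matvec (N * m (Suc 0)) (D (Suc 0)) (G' (Suc 0)) p
                    = matvec (N * m (Suc 0)) (D (Suc 0)) (G (Suc 0)) p" by simp
        qed
        show "\<forall>c < N * m (Suc 0). G' (Suc 0) c = G (Suc 0) c"
          using L[OF i1 eqs] m0 by simp
      qed
    next
      case (Suc j)
      show ?case
      proof
        assume K: "Suc (Suc j) \<le> K"
        hence i1: "Suc (Suc j) \<in> {1..K}" and i2: "Suc (Suc j) \<in> {2..K}" by auto
        have IH: "\<forall>c < N * m (Suc j). G' (Suc j) c = G (Suc j) c" using Suc K by simp
        have eqs: "\<forall>p<N * m (Suc j). matvec (N * m (Suc (Suc j))) (D (Suc (Suc j))) (G' (Suc (Suc j))) p
                    = matvec (N * m (Suc (Suc j))) (D (Suc (Suc j))) (G (Suc (Suc j))) p"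
        proof (intro allI impI)
          fix p assume p: "p < N * m (Suc j)"
          have "G' (Suc j) p = matvec (N * m (Suc (Suc j))) (D (Suc (Suc j))) (G' (Suc (Suc j))) p"
          proof -
            have "\<forall>p<N * m (Suc (Suc j) - 1). (if Suc (Suc j) = 1 then X p else G' (Suc (Suc j) - 1) p)
                 = matvec (N * m (Suc (Suc j))) (D (Suc (Suc j))) (G' (Suc (Suc j))) p"
              using E i1 by blast
            thus ?thesis using p by simp
          qed
          moreover have "G (Suc j) p = matvec (N * m (Suc (Suc j))) (D (Suc (Suc j))) (G (Suc (Suc j))) p"
          proof -
            have "\<forall>p<N * m (Suc (Suc j) - 1). G (Suc (Suc j) - 1) p
                 = matvec (N * m (Suc (Suc j))) (D (Suc (Suc j))) (G (Suc (Suc j))) p"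
              using chain i2 by blast
            thus ?thesis using p by simp
          qed
          ultimately show "matvec (N * m (Suc (Suc j))) (D (Suc (Suc j))) (G' (Suc (Suc j))) p
                    = matvec (N * m (Suc (Suc j))) (D (Suc (Suc j))) (G (Suc (Suc j))) p"
            using IH p by simp
        qed
        have j1: "Suc j \<in> {1..K}" using K by auto
        show "\<forall>c < N * m (Suc (Suc j)). G' (Suc (Suc j)) c = G (Suc (Suc j)) c"
          using L[OF i1 eqs] bspec[OF m_pos j1] by simp
      qed
    qed
    show "\<forall>i\<in>{1..K}. \<forall>c < N * m i. G' i c = G i c"
    proof
      fix i assume i: "i \<in> {1..K}"
      then obtain j where "i = Suc j" by (cases i) auto
      thus "\<forall>c < N * m i. G' i c = G i c" using main[of j] i by auto
    qed
  qed
qed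

end
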